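(* Let $\mathcal{T}$ be a finite tree, $w:V(\mathcal{T})\to\mathbb{R}_{\ge0}$, $m=w(\mathcal{T})$, and let $C$ be a centroid tree of $(\mathcal{T},w)$ with $\mathtt{cost}_w(C)=\mathtt{cent}(\mathcal{T},w)$. Let $p\ge0$ and let $v_0,v_1,\dots,v_p$ be vertices such that $v_0$ is the root of $C$ and $v_i$ is a child of $v_{i-1}$ in $C$ for $1\le i\le p$; let $P=\{v_0,\dots,v_p\}$. Then $$\mathtt{cent}(\mathcal{T},w)\le\left(2-\frac1{2^p}\right)m+\sum_{\mathcal{H}\in\mathbb{C}(\mathcal{T}-P)}\mathtt{cent}(\mathcal{H},w).$$
   Context: $\mathbb{C}(G)$ denotes the set of connected components of a graph $G$, and $\mathcal{T}-P$ is the subgraph induced by $V(\mathcal{T})\setminus P$. For a subgraph $\mathcal{H}$, $w(\mathcal{H})=\sum_{x\in V(\mathcal{H})}w(x)$, and $w$ also denotes its restriction to $V(\mathcal{H})$. A search tree on a tree $\mathcal{T}$ is a rooted tree $T$ with vertex set $V(\mathcal{T})$ defined recursively: its root is an arbitrary vertex $r$, and the children of $r$ are the roots of search trees built on the connected components of $\mathcal{T}-r$; a single-vertex tree has only itself as search tree. $\mathtt{cost}_w(T)=\sum_x w(x)\,\mathtt{depth}_T(x)$ with root depth $1$. A vertex $v$ is a centroid of $(\mathcal{T},w)$ if each component $\mathcal{H}$ of $\mathcal{T}-v$ has $w(\mathcal{H})\le w(\mathcal{T})/2$. A search tree $T$ is a centroid tree if each vertex $x$ is a centroid of $(\mathcal{T}[V(T_x)],w)$,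 $T_x$ being the subtree of $T$ rooted at $x$. $\mathtt{cent}(\mathcal{T},w)$ is the maximum cost of a centroid tree of $(\mathcal{T},w)$. *)

theory Defs
  imports Complex_Main
begin

text \<open>A graph is a vertex set S together with the (global) edge relation E;
  the induced subgraph on a subset S' is simply (S', E).\<close>

definition edges_in :: "('a \<Rightarrow> 'a \<Rightarrow> bool) \<Rightarrow> 'a set \<Rightarrow> ('a \<times> 'a) set" where
  "edges_in E S = {(a, b). a \<in> S \<and> b \<in> S \<and> E a b}"

definition reach :: "('a \<Rightarrow> 'a \<Rightarrow> bool) \<Rightarrow> 'a set \<Rightarrow> 'a \<Rightarrow> 'a \<Rightarrow> bool" where
  "reach E S x y \<longleftrightarrow> x \<in> S \<and> (x, y) \<in> (edges_in E S)\<^sup>*"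

definition comps :: "('a \<Rightarrow> 'a \<Rightarrow> bool) \<Rightarrow> 'a set \<Rightarrow> 'a set set" where
  "comps E S = {{y. reach E S x y} | x. x \<in> S}"

definition connected_graph :: "('a \<Rightarrow> 'a \<Rightarrow> bool) \<Rightarrow> 'a set \<Rightarrow> bool" where
  "connected_graph E S \<longleftrightarrow> S \<noteq> {} \<and> (\<forall>x\<in>S. \<forall>y\<in>S. reach E S x y)"

definition has_cycle :: "('a \<Rightarrow> 'a \<Rightarrow> bool) \<Rightarrow> 'a set \<Rightarrow> bool" where
  "has_cycle E S \<longleftrightarrow> (\<exists>xs. length xs \<ge> 3 \<and> distinct xs \<and> set xs \<subseteq> S \<and>
      (\<forall>i. Suc i < length xs \<longrightarrow> E (xs ! i) (xs ! Suc i)) \<and> E (last xs) (hd xs))"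

definition is_tree :: "('a \<Rightarrow> 'a \<Rightarrow> bool) \<Rightarrow> 'a set \<Rightarrow> bool" where
  "is_tree E V \<longleftrightarrow> finite V \<and> (\<forall>x\<in>V. \<forall>y\<in>V. E x y \<longleftrightarrow> E y x) \<and> (\<forall>x\<in>V. \<not> E x x)
     \<and> connected_graph E V \<and> \<not> has_cycle E V"

datatype 'a rtree = Node 'a "'a rtree list"

fun root :: "'a rtree \<Rightarrow> 'a" where
  "root (Node r ts) = r"

fun children :: "'a rtree \<Rightarrow> 'a rtree list" where
  "children (Node r ts) = ts"

fun verts :: "'a rtree \<Rightarrow> 'a set" where
  "verts (Node r ts) = insert r (\<Union>t\<in>set ts. verts t)"

fun subtrees :: "'a rtree \<Rightarrow> 'a rtree list" where
  "subtrees (Node r ts) = Node r ts # concat (map subtrees ts)"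

inductive search_tree :: "('a \<Rightarrow> 'a \<Rightarrow> bool) \<Rightarrow> 'a set \<Rightarrow> 'a rtree \<Rightarrow> bool" where
  "\<lbrakk> r \<in> S; distinct (map verts ts); set (map verts ts) = comps E (S - {r});
     \<forall>t\<in>set ts. search_tree E (verts t) t \<rbrakk> \<Longrightarrow> search_tree E S (Node r ts)"

text \<open>depth_T(x) = number of vertices on the root-to-x path = number of subtrees
  containing x (root has depth 1).\<close>
definition depth :: "'a rtree \<Rightarrow> 'a \<Rightarrow> nat" where
  "depth t x = length (filter (\<lambda>s. x \<in> verts s) (subtrees t))"

definition cost :: "('a \<Rightarrow> real) \<Rightarrow> 'a rtree \<Rightarrow> real" where
  "cost w t = (\<Sum>x\<in>verts t. w x * real (depth t x))"

definition child_of :: "'a rtree \<Rightarrow> 'a \<Rightarrow> 'a \<Rightarrow> bool" where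
  "child_of t x y \<longleftrightarrow> (\<exists>s\<in>set (subtrees t). root s = x \<and> y \<in> root ` set (children s))"

definition is_centroid :: "('a \<Rightarrow> 'a \<Rightarrow> bool) \<Rightarrow> 'a set \<Rightarrow> ('a \<Rightarrow> real) \<Rightarrow> 'a \<Rightarrow> bool" where
  "is_centroid E S w v \<longleftrightarrow> v \<in> S \<and>
     (\<forall>H\<in>comps E (S - {v}). sum w H \<le> sum w S / 2)"

definition centroid_tree :: "('a \<Rightarrow> 'a \<Rightarrow> bool) \<Rightarrow> 'a set \<Rightarrow> ('a \<Rightarrow> real) \<Rightarrow> 'a rtree \<Rightarrow> bool" where
  "centroid_tree E S w t \<longleftrightarrow> search_tree E S t \<and>
     (\<forall>s\<in>set (subtrees t). is_centroid E (verts s) w (root s))"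

definition cent :: "('a \<Rightarrow> 'a \<Rightarrow> bool) \<Rightarrow> 'a set \<Rightarrow> ('a \<Rightarrow> real) \<Rightarrow> real" where
  "cent E S w = Max {cost w t | t. centroid_tree E S w t}"

end

theory Submission
  imports Defs
begin


lemma verts_finite: "finite (verts t)"
  by (induction t) auto

lemma root_in_verts: "root t \<in> verts t"
  by (cases t) auto

lemma subtrees_verts: "s \<in> set (subtrees t) \<Longrightarrow> verts s \<subseteq> verts t"
proof (induction t arbitrary: s)
  case (Node r ts)
  then show ?case by (fastforce)
qed

lemma subtrees_trans: "s \<in> set (subtrees t) \<Longrightarrow> u \<in> set (subtrees s) \<Longrightarrow> u \<in> set (subtrees t)"
proof (induction t arbitrary: s)
  case (Node r ts)
  then show ?case by fastforce
qed

lemma subtrees_self: "t \<in> set (subtrees t)"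
  by (cases t) auto

definition cst :: "('a \<Rightarrow> real) \<Rightarrow> 'a rtree \<Rightarrow> real" where
  "cst w t = sum_list (map (\<lambda>s. sum w (verts s)) (subtrees t))"

lemma sum_list_concat': "sum_list (concat xss) = sum_list (map sum_list (xss::real list list))"
  by (induction xss) auto

lemma cst_Node: "cst w (Node r ts) = sum w (verts (Node r ts)) + sum_list (map (cst w) ts)"
  unfolding cst_def by (simp add: map_concat sum_list_concat' comp_def)

lemma cost_gen:
  assumes "finite A" "\<forall>s\<in>set L. verts s \<subseteq> A"
  shows "(\<Sum>x\<in>A. w x * real (length (filter (\<lambda>s. x \<in> verts s) L))) = sum_list (map (\<lambda>s. sum w (verts s)) L)"
  using assms(2)
proof (induction L)
  case Nil
  then show ?case by simp
next
  case (Cons a L)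
  have "(\<Sum>x\<in>A. w x * real (length (filter (\<lambda>s. x \<in> verts s) (a#L))))
     = (\<Sum>x\<in>A. (if x \<in> verts a then w x else 0)) + (\<Sum>x\<in>A. w x * real (length (filter (\<lambda>s. x \<in> verts s) L)))"
    by (auto simp add: sum.distrib[symmetric] algebra_simps intro!: sum.cong)
  also have "(\<Sum>x\<in>A. (if x \<in> verts a then w x else 0)) = sum w (verts a)"
    using Cons.prems assms(1) by (simp add: sum.If_cases Int_absorb1 Int_commute)
  finally show ?case using Cons by simp
qed

lemma cost_cst: "cost w t = cst w t"
  unfolding cost_def cst_def depth_def
  by (rule cost_gen) (auto simp: verts_finite subtrees_verts)



definition good :: "('a \<Rightarrow> 'a \<Rightarrow> bool) \<Rightarrow> 'a set \<Rightarrow> 'a set \<Rightarrow> bool" where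
  "good E A X \<longleftrightarrow> X \<noteq> {} \<and> X \<subseteq> A \<and> (\<forall>x\<in>X. \<forall>y\<in>X. (x,y) \<in> (edges_in E X)\<^sup>*)
     \<and> (\<forall>x\<in>X. \<forall>y\<in>A. E x y \<longrightarrow> y \<in> X)"

lemma edges_in_mono: "A \<subseteq> B \<Longrightarrow> edges_in E A \<subseteq> edges_in E B"
  unfolding edges_in_def by auto

lemma reach_in: "reach E A x y \<Longrightarrow> y \<in> A"
  unfolding reach_def
proof (elim conjE)
  assume "x \<in> A" "(x, y) \<in> (edges_in E A)\<^sup>*"
  from this(2) show "y \<in> A"
  proof (induction rule: rtrancl_induct)
    case base then show ?case using \<open>x \<in> A\<close> .
  next
    case (step y z) then show ?case by (simp add: edges_in_def)
  qed
qed

lemma comps_sub: "X \<in> comps E A \<Longrightarrow> X \<subseteq> A"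
  by (auto simp: comps_def dest: reach_in)

lemma comps_Union: "\<Union> (comps E A) = A"
proof
  show "\<Union> (comps E A) \<subseteq> A" using comps_sub by blast
  show "A \<subseteq> \<Union> (comps E A)"
  proof
    fix x assume "x \<in> A"
    then have "x \<in> {y. reach E A x y}" by (simp add: reach_def)
    moreover have "{y. reach E A x y} \<in> comps E A" using \<open>x \<in> A\<close> unfolding comps_def by blast
    ultimately show "x \<in> \<Union> (comps E A)" by blast
  qed
qed

lemma comps_finite: "finite A \<Longrightarrow> finite (comps E A)"
  by (rule finite_subset[of _ "Pow A"]) (auto dest: comps_sub)

lemma good_stay:
  assumes "good E B Y" "X \<subseteq> B" "\<forall>x\<in>X. \<forall>y\<in>X. (x,y) \<in> (edges_in E X)\<^sup>*" "x \<in> X" "x \<in> Y"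
  shows "X \<subseteq> Y"
proof
  fix y assume "y \<in> X"
  then have "(x,y) \<in> (edges_in E X)\<^sup>*" using assms by blast
  then show "y \<in> Y"
  proof (induction rule: rtrancl_induct)
    case base then show ?case using assms by simp
  next
    case (step y z)
    then show ?case using assms(1,2) unfolding good_def edges_in_def by blast
  qed
qed

lemma good_eq: assumes "good E B X" "good E B Y" "x \<in> X" "x \<in> Y" shows "X = Y"
proof
  show "X \<subseteq> Y" by (rule good_stay[of E B Y X x]) (use assms in \<open>auto simp: good_def\<close>)
  show "Y \<subseteq> X" by (rule good_stay[of E B X Y x]) (use assms in \<open>auto simp: good_def\<close>)
qed

lemma comps_good:
  assumes sym: "\<forall>x\<in>A. \<forall>y\<in>A. E x y \<longleftrightarrow> E y x"
  shows "comps E A = {X. good E A X}"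
proof (intro set_eqI iffI; simp)
  fix X assume "X \<in> comps E A"
  then obtain z where z: "z \<in> A" and X: "X = {y. reach E A z y}" unfolding comps_def by blast
  have stay: "(z,y) \<in> (edges_in E X)\<^sup>*" if "reach E A z y" for y
  proof -
    from that have "(z,y) \<in> (edges_in E A)\<^sup>*" by (simp add: reach_def)
    then show ?thesis
    proof (induction rule: rtrancl_induct)
      case base then show ?case by simp
    next
      case (step y y')
      have "(z,y') \<in> (edges_in E A)\<^sup>*" using step(1,2) by (rule rtrancl_into_rtrancl)
      then have "y \<in> X" "y' \<in> X" using step(1) z X unfolding reach_def by auto
      then have "(y,y') \<in> edges_in E X" using step(2) unfolding edges_in_def by auto
      then show ?case by (rule rtrancl_into_rtrancl[OF step(3)])
    qed
  qed
  have XA: "X \<subseteq> A" using \<open>X \<in> comps E A\<close> comps_sub by blast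
  have symX: "(edges_in E X)\<inverse> = edges_in E X"
    using XA sym unfolding edges_in_def by auto
  have "\<forall>x\<in>X. \<forall>y\<in>X. (x,y) \<in> (edges_in E X)\<^sup>*"
  proof (intro ballI)
    fix x y assume "x \<in> X" "y \<in> X"
    then have "(z,x) \<in> (edges_in E X)\<^sup>*" "(z,y) \<in> (edges_in E X)\<^sup>*" using stay X by auto
    then have "(x,z) \<in> (edges_in E X)\<^sup>*"
      using rtrancl_converseI[of z x "edges_in E X"] symX by simp
    then show "(x,y) \<in> (edges_in E X)\<^sup>*" using \<open>(z,y) \<in> _\<close> by (rule rtrancl_trans)
  qed
  moreover have "X \<noteq> {}" using X z by (auto simp: reach_def)
  moreover have "\<forall>x\<in>X. \<forall>y\<in>A. E x y \<longrightarrow> y \<in> X"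
  proof (intro ballI impI)
    fix x y assume "x \<in> X" "y \<in> A" "E x y"
    then have "(x,y) \<in> edges_in E A" using XA unfolding edges_in_def by auto
    moreover have "(z,x) \<in> (edges_in E A)\<^sup>*" using \<open>x \<in> X\<close> X unfolding reach_def by auto
    ultimately show "y \<in> X" using X z unfolding reach_def by (auto intro: rtrancl_into_rtrancl)
  qed
  ultimately show "good E A X" using XA unfolding good_def by blast
next
  fix X assume g: "good E A X"
  then obtain z where z: "z \<in> X" unfolding good_def by blast
  have "X = {y. reach E A z y}"
  proof (intro set_eqI iffI)
    fix y assume "y \<in> X"
    then have "(z,y) \<in> (edges_in E X)\<^sup>*" using g z unfolding good_def by blast
    then have "(z,y) \<in> (edges_in E A)\<^sup>*"
      using rtrancl_mono[OF edges_in_mono] g unfolding good_def by blast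
    then show "y \<in> {y. reach E A z y}" using g z unfolding good_def reach_def by blast
  next
    fix y assume "y \<in> {y. reach E A z y}"
    then have "(z,y) \<in> (edges_in E A)\<^sup>*" by (simp add: reach_def)
    then show "y \<in> X"
    proof (induction rule: rtrancl_induct)
      case base then show ?case using z .
    next
      case (step y y') then show ?case using g unfolding good_def edges_in_def by blast
    qed
  qed
  then show "X \<in> comps E A" using z g unfolding comps_def good_def by blast
qed



lemma st_cases:
  assumes "search_tree E S t"
  obtains r ts where "t = Node r ts" "r \<in> S" "distinct (map verts ts)"
    "verts ` set ts = comps E (S - {r})" "\<forall>t\<in>set ts. search_tree E (verts t) t"
  using assms by (cases rule: search_tree.cases) auto

lemma st_verts: "search_tree E S t \<Longrightarrow> verts t = S"
proof -
  assume "search_tree E S t"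
  then obtain r ts where "t = Node r ts" "r \<in> S" "verts ` set ts = comps E (S - {r})"
    by (rule st_cases)
  then show ?thesis using comps_Union[of E "S - {r}"] by auto
qed

lemma st_children_disj:
  assumes "search_tree E S (Node r ts)" "\<forall>x\<in>S. \<forall>y\<in>S. E x y \<longleftrightarrow> E y x"
    "t1 \<in> set ts" "t2 \<in> set ts" "x \<in> verts t1" "x \<in> verts t2"
  shows "t1 = t2"
proof -
  obtain r' ts' where "Node r ts = Node r' ts'" "r' \<in> S" "distinct (map verts ts')"
    "verts ` set ts' = comps E (S - {r'})"
    using assms(1) by (rule st_cases)
  then have d: "distinct (map verts ts)" and c: "verts ` set ts = comps E (S - {r})" by auto
  have sym: "\<forall>x\<in>S-{r}. \<forall>y\<in>S-{r}. E x y \<longleftrightarrow> E y x" using assms(2) by blast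
  have "good E (S - {r}) (verts t1)" "good E (S - {r}) (verts t2)"
    using c assms(3,4) comps_good[OF sym] by auto
  then have "verts t1 = verts t2" using good_eq assms(5,6) by metis
  then show ?thesis using d assms(3,4) by (auto dest: inj_onD simp: distinct_map)
qed

lemma ct_child:
  assumes "centroid_tree E S w (Node r ts)" "t' \<in> set ts"
  shows "centroid_tree E (verts t') w t'"
proof -
  obtain r' ts' where "Node r ts = Node r' ts'" "\<forall>t\<in>set ts'. search_tree E (verts t) t"
    using assms(1) unfolding centroid_tree_def by (metis st_cases)
  then have "search_tree E (verts t') t'" using assms(2) by auto
  moreover have "\<forall>s\<in>set (subtrees t'). is_centroid E (verts s) w (root s)"
    using assms unfolding centroid_tree_def by auto
  ultimately show ?thesis unfolding centroid_tree_def by simp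
qed

lemma st_finite: "finite S \<Longrightarrow> finite {t. search_tree E S t}"
proof (induction "card S" arbitrary: S rule: less_induct)
  case less
  define F where "F = (\<Union>B\<in>Pow S - {S}. {t. search_tree E B t})"
  have fF: "finite F" unfolding F_def
  proof (rule finite_UN_I)
    show "finite (Pow S - {S})" using less.prems by simp
    fix B assume "B \<in> Pow S - {S}"
    then have "B \<subset> S" by auto
    then show "finite {t. search_tree E B t}"
      using less.hyps less.prems psubset_card_mono finite_subset by (metis psubset_imp_subset)
  qed
  have "{t. search_tree E S t} \<subseteq> (\<lambda>(r,ts). Node r ts) ` (S \<times> {ts. set ts \<subseteq> F \<and> length ts \<le> card (Pow S)})"
  proof
    fix t assume "t \<in> {t. search_tree E S t}"
    then obtain r ts where t: "t = Node r ts" "r \<in> S" "distinct (map verts ts)"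
      "verts ` set ts = comps E (S - {r})" "\<forall>t\<in>set ts. search_tree E (verts t) t"
      by (auto elim: st_cases)
    have "set ts \<subseteq> F"
    proof
      fix t' assume "t' \<in> set ts"
      then have "verts t' \<in> comps E (S - {r})" using t by auto
      then have "verts t' \<subseteq> S - {r}" by (rule comps_sub)
      then have "verts t' \<in> Pow S - {S}" using t(2) by auto
      then show "t' \<in> F" unfolding F_def using t(5) \<open>t' \<in> set ts\<close> by auto
    qed
    moreover have "length ts \<le> card (Pow S)"
    proof -
      have "length ts = card (verts ` set ts)"
        using t(3) distinct_card by (metis length_map set_map)
      also have "\<dots> \<le> card (Pow S)"
      proof (intro card_mono)
        show "finite (Pow S)" using less.prems by simp
        show "verts ` set ts \<subseteq> Pow S" using t(4) comps_sub[of _ E "S - {r}"] by blast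
      qed
      finally show ?thesis .
    qed
    ultimately show "t \<in> (\<lambda>(r,ts). Node r ts) ` (S \<times> {ts. set ts \<subseteq> F \<and> length ts \<le> card (Pow S)})"
      using t by auto
  qed
  moreover have "finite (S \<times> {ts. set ts \<subseteq> F \<and> length ts \<le> card (Pow S)})"
    using less.prems fF finite_lists_length_le by blast
  ultimately show ?case by (meson finite_imageI finite_subset)
qed

lemma cost_le_cent:
  assumes "centroid_tree E S w t" "finite S"
  shows "cost w t \<le> cent E S w"
proof -
  have "{cost w t | t. centroid_tree E S w t} \<subseteq> cost w ` {t. search_tree E S t}"
    unfolding centroid_tree_def by auto
  then have "finite {cost w t | t. centroid_tree E S w t}"
    using st_finite[OF assms(2)] finite_subset by blast
  then show ?thesis unfolding cent_def using assms(1) by (intro Max_ge) auto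
qed



lemma subtree_cases: "s \<in> set (subtrees (Node r ts)) \<Longrightarrow> s \<noteq> Node r ts \<Longrightarrow> \<exists>t\<in>set ts. s \<in> set (subtrees t)"
  by auto

lemma child_root_verts: "c \<in> set (children s) \<Longrightarrow> root c \<in> verts s"
  by (cases s) (auto intro: root_in_verts)

lemma main:
  assumes symV: "\<forall>x\<in>V. \<forall>y\<in>V. E x y \<longleftrightarrow> E y x" and wpos: "\<forall>x\<in>V. w x \<ge> 0"
  shows "centroid_tree E S w t \<Longrightarrow> S \<subseteq> V \<Longrightarrow> v 0 = root t \<Longrightarrow>
     \<forall>i\<in>{1..p}. child_of t (v (i - 1)) (v i) \<Longrightarrow>
     cst w t \<le> (2 - 1 / 2 ^ p) * sum w S + (\<Sum>H\<in>comps E (S - v ` {0..p}). cent E H w)"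
proof (induction p arbitrary: S t v)
  case 0
  from 0 have st: "search_tree E S t" unfolding centroid_tree_def by simp
  then obtain r ts where t: "t = Node r ts" "r \<in> S" "distinct (map verts ts)"
      "verts ` set ts = comps E (S - {r})" "\<forall>t\<in>set ts. search_tree E (verts t) t"
    by (rule st_cases)
  have vS: "verts t = S" using st st_verts by blast
  have dts: "distinct ts" using t(3) distinct_map by blast
  have inj: "inj_on verts (set ts)" using t(3) distinct_map by blast
  have "cst w t = sum w S + (\<Sum>t'\<in>set ts. cst w t')"
    using cst_Node[of w r ts] t(1) vS dts by (simp add: sum_list_distinct_conv_sum_set)
  also have "(\<Sum>t'\<in>set ts. cst w t') \<le> (\<Sum>t'\<in>set ts. cent E (verts t') w)"
  proof (rule sum_mono)
    fix t' assume "t' \<in> set ts"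
    then have "centroid_tree E (verts t') w t'" using ct_child 0(1) t(1) by metis
    then show "cst w t' \<le> cent E (verts t') w"
      using cost_le_cent verts_finite cost_cst by metis
  qed
  also have "(\<Sum>t'\<in>set ts. cent E (verts t') w) = (\<Sum>H\<in>comps E (S - {r}). cent E H w)"
    using sum.reindex[OF inj, of "\<lambda>H. cent E H w"] t(4) by simp
  finally show ?case using 0(3) t(1) by simp
next
  case (Suc p)
  from Suc.prems have st: "search_tree E S t" unfolding centroid_tree_def by simp
  then obtain r ts where t: "t = Node r ts" "r \<in> S" "distinct (map verts ts)"
      "verts ` set ts = comps E (S - {r})" "\<forall>t\<in>set ts. search_tree E (verts t) t"
    by (rule st_cases)
  have vS: "verts t = S" using st st_verts by blast
  have dts: "distinct ts" using t(3) distinct_map by blast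
  have inj: "inj_on verts (set ts)" using t(3) distinct_map by blast
  have symS: "\<forall>x\<in>S. \<forall>y\<in>S. E x y \<longleftrightarrow> E y x" using symV Suc.prems(2) by blast
  define A where "A = S - {r}"
  have symA: "\<forall>x\<in>A. \<forall>y\<in>A. E x y \<longleftrightarrow> E y x" using symS unfolding A_def by auto
  have stN: "search_tree E S (Node r ts)" using st t(1) by simp
  have sub_A: "verts t' \<subseteq> A" if "t' \<in> set ts" for t'
  proof -
    have "verts t' \<in> comps E A" using that t(4) A_def by auto
    then show ?thesis by (rule comps_sub)
  qed
  have v0: "v 0 = r" using Suc.prems(3) t(1) by simp
  have "child_of t (v 0) (v 1)" using Suc.prems(4) by force
  then obtain s where s: "s \<in> set (subtrees t)" "root s = r" "v 1 \<in> root ` set (children s)"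
    unfolding child_of_def using v0 by auto
  have "s = t"
  proof (rule ccontr)
    assume "s \<noteq> t"
    then obtain t'' where "t'' \<in> set ts" "s \<in> set (subtrees t'')" using s(1) t(1) by auto
    then have "r \<in> verts t''" using s(2) root_in_verts[of s] subtrees_verts[of s t''] by auto
    then show False using sub_A[OF \<open>t'' \<in> set ts\<close>] A_def by auto
  qed
  then obtain t1 where t1: "t1 \<in> set ts" "root t1 = v 1" using s t(1) by auto
  define S1 where "S1 = verts t1"
  have S1A: "S1 \<subseteq> A" using sub_A t1(1) S1_def by blast
  have ch: "\<forall>i\<in>{1..Suc p}. child_of t (v (i - 1)) (v i)" using Suc.prems(4) .
  have path: "v j \<in> S1 \<and> (j \<ge> 2 \<longrightarrow> child_of t1 (v (j - 1)) (v j))" if "1 \<le> j" "j \<le> Suc p" for j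
    using that
  proof (induction j)
    case 0 then show ?case by simp
  next
    case (Suc j)
    show ?case
    proof (cases "j = 0")
      case True
      have "v 1 \<in> S1" using t1(2) root_in_verts[of t1] S1_def by simp
      then show ?thesis using True by simp
    next
      case False
      then have vj: "v j \<in> S1" using Suc by auto
      have "Suc j \<in> {1..Suc p}" using Suc.prems by simp
      then have "child_of t (v (Suc j - 1)) (v (Suc j))" using ch by blast
      then have "child_of t (v j) (v (Suc j))" by simp
      then obtain s where s: "s \<in> set (subtrees t)" "root s = v j" "v (Suc j) \<in> root ` set (children s)"
        unfolding child_of_def by auto
      have "s \<noteq> t" using s(2) vj S1A A_def t(1) by auto
      then obtain t'' where t'': "t'' \<in> set ts" "s \<in> set (subtrees t'')" using s(1) t(1) by auto
      have "v j \<in> verts t''" using s(2) root_in_verts[of s] subtrees_verts[OF t''(2)] by auto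
      then have "t'' = t1" using st_children_disj[OF stN symS t''(1) t1(1)] vj S1_def by blast
      then have c: "child_of t1 (v j) (v (Suc j))" using s t'' unfolding child_of_def by blast
      have "v (Suc j) \<in> verts s" using s(3) child_root_verts[of _ s] by auto
      then have "v (Suc j) \<in> S1" using t'' \<open>t'' = t1\<close> subtrees_verts S1_def by blast
      then show ?thesis using c by simp
    qed
  qed
  have ct1: "centroid_tree E S1 w t1" using ct_child Suc.prems(1) t(1) t1(1) S1_def by metis
  have IH: "cst w t1 \<le> (2 - 1 / 2 ^ p) * sum w S1 + (\<Sum>H\<in>comps E (S1 - (\<lambda>i. v (Suc i)) ` {0..p}). cent E H w)"
  proof (rule Suc.IH[OF ct1])
    show "S1 \<subseteq> V" using S1A A_def Suc.prems(2) by blast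
    show "v (Suc 0) = root t1" using t1 by simp
    show "\<forall>i\<in>{1..p}. child_of t1 (v (Suc (i - 1))) (v (Suc i))"
    proof
      fix i assume "i \<in> {1..p}"
      then have "child_of t1 (v (Suc i - 1)) (v (Suc i))" using path[of "Suc i"] by auto
      then show "child_of t1 (v (Suc (i - 1))) (v (Suc i))" using \<open>i \<in> {1..p}\<close> by simp
    qed
  qed
  define P1 where "P1 = v ` {1..Suc p}"
  have img: "(\<lambda>i. v (Suc i)) ` {0..p} = P1" unfolding P1_def
  proof -
    have "{1..Suc p} = Suc ` {0..p}" by (simp add: image_Suc_atLeastAtMost)
    then show "(\<lambda>i. v (Suc i)) ` {0..p} = v ` {1..Suc p}" by (simp only: image_image)
  qed
  have P1S1: "P1 \<subseteq> S1" using path unfolding P1_def by auto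
  have img0: "v ` {0..Suc p} = insert r P1"
  proof -
    have "{0..Suc p} = insert 0 {1..Suc p}" by auto
    then show ?thesis using v0 P1_def by simp
  qed
  have SP: "S - v ` {0..Suc p} = A - P1" using img0 A_def by auto
  have symAP: "\<forall>x\<in>A - P1. \<forall>y\<in>A - P1. E x y \<longleftrightarrow> E y x" using symA by blast
  have symSP: "\<forall>x\<in>S1 - P1. \<forall>y\<in>S1 - P1. E x y \<longleftrightarrow> E y x" using symA S1A by blast
  have gS1: "good E A S1" using t(4) t1(1) comps_good[OF symA] S1_def A_def by auto
  have compsA: "comps E A = verts ` set ts" using t(4) A_def by simp
  have disj_other: "Y \<inter> S1 = {}" if "Y \<in> comps E A - {S1}" for Y
  proof (rule ccontr)
    assume "Y \<inter> S1 \<noteq> {}"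
    then obtain x where "x \<in> Y" "x \<in> S1" by blast
    moreover have "good E A Y" using that comps_good[OF symA] by auto
    ultimately have "Y = S1" using good_eq gS1 by metis
    then show False using that by simp
  qed
  have ceq: "comps E (A - P1) = comps E (S1 - P1) \<union> (comps E A - {S1})"
  proof (intro set_eqI iffI)
    fix X assume "X \<in> comps E (A - P1)"
    then have gX: "good E (A - P1) X" using comps_good[OF symAP] by auto
    then obtain x where x: "x \<in> X" unfolding good_def by blast
    then have "x \<in> A" using gX unfolding good_def by blast
    then obtain Y where Y: "Y \<in> comps E A" "x \<in> Y" using comps_Union[of E A] by blast
    then have gY: "good E A Y" using comps_good[OF symA] by auto
    show "X \<in> comps E (S1 - P1) \<union> (comps E A - {S1})"
    proof (cases "Y = S1")
      case True
      have "X \<subseteq> S1"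
        by (rule good_stay[OF gS1, of X x]) (use gX x Y True in \<open>auto simp: good_def\<close>)
      then have "good E (S1 - P1) X" using gX S1A unfolding good_def by blast
      then show ?thesis using comps_good[OF symSP] by auto
    next
      case False
      then have "Y \<inter> P1 = {}" using disj_other Y P1S1 by blast
      then have "good E (A - P1) Y" using gY unfolding good_def by blast
      then have "X = Y" using good_eq gX x Y(2) by metis
      then show ?thesis using Y False by auto
    qed
  next
    fix X assume "X \<in> comps E (S1 - P1) \<union> (comps E A - {S1})"
    then show "X \<in> comps E (A - P1)"
    proof
      assume "X \<in> comps E (S1 - P1)"
      then have gX: "good E (S1 - P1) X" using comps_good[OF symSP] by auto
      have "good E (A - P1) X"
        unfolding good_def
      proof (intro conjI)
        show "X \<noteq> {}" "\<forall>x\<in>X. \<forall>y\<in>X. (x, y) \<in> (edges_in E X)\<^sup>*" using gX unfolding good_def by auto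
        show "X \<subseteq> A - P1" using gX S1A unfolding good_def by blast
        show "\<forall>x\<in>X. \<forall>y\<in>A - P1. E x y \<longrightarrow> y \<in> X"
        proof (intro ballI impI)
          fix x y assume "x \<in> X" "y \<in> A - P1" "E x y"
          then have "y \<in> S1" using gS1 gX unfolding good_def by blast
          then show "y \<in> X" using gX \<open>x \<in> X\<close> \<open>y \<in> A - P1\<close> \<open>E x y\<close> unfolding good_def by blast
        qed
      qed
      then show ?thesis using comps_good[OF symAP] by auto
    next
      assume X: "X \<in> comps E A - {S1}"
      then have "good E A X" using comps_good[OF symA] by auto
      moreover have "X \<inter> P1 = {}" using disj_other[OF X] P1S1 by blast
      ultimately have "good E (A - P1) X" unfolding good_def by blast
      then show ?thesis using comps_good[OF symAP] by auto
    qed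
  qed
  have finS: "finite S" using vS verts_finite by metis
  have fin1: "finite (comps E (S1 - P1))" using comps_finite finS S1A A_def
    by (metis Diff_subset finite_subset)
  have fin2: "finite (comps E A - {S1})" using comps_finite finS A_def by blast
  have disj12: "comps E (S1 - P1) \<inter> (comps E A - {S1}) = {}"
  proof (rule ccontr)
    assume "comps E (S1 - P1) \<inter> (comps E A - {S1}) \<noteq> {}"
    then obtain X where X1: "X \<in> comps E (S1 - P1)" and X2: "X \<in> comps E A - {S1}" by blast
    have "good E (S1 - P1) X" using X1 comps_good[OF symSP] by auto
    then have "X \<noteq> {}" "X \<subseteq> S1" unfolding good_def by auto
    then show False using disj_other[OF X2] by blast
  qed
  have sumeq: "(\<Sum>H\<in>comps E (A - P1). cent E H w) =
      (\<Sum>H\<in>comps E (S1 - P1). cent E H w) + (\<Sum>H\<in>comps E A - {S1}. cent E H w)"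
    using ceq sum.union_disjoint[OF fin1 fin2 disj12] by simp
  have "cst w t = sum w S + (\<Sum>t'\<in>set ts. cst w t')"
    using cst_Node[of w r ts] t(1) vS dts by (simp add: sum_list_distinct_conv_sum_set)
  also have "(\<Sum>t'\<in>set ts. cst w t') = cst w t1 + (\<Sum>t'\<in>set ts - {t1}. cst w t')"
    using t1(1) by (simp add: sum.remove)
  also have "(\<Sum>t'\<in>set ts - {t1}. cst w t') \<le> (\<Sum>t'\<in>set ts - {t1}. cent E (verts t') w)"
  proof (rule sum_mono)
    fix t' assume "t' \<in> set ts - {t1}"
    then have "centroid_tree E (verts t') w t'" using ct_child Suc.prems(1) t(1) by (metis DiffD1)
    then show "cst w t' \<le> cent E (verts t') w"
      using cost_le_cent verts_finite cost_cst by metis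
  qed
  also have "(\<Sum>t'\<in>set ts - {t1}. cent E (verts t') w) = (\<Sum>H\<in>comps E A - {S1}. cent E H w)"
  proof -
    have inj': "inj_on verts (set ts - {t1})" using inj by (rule inj_on_subset) blast
    have "verts ` (set ts - {t1}) = comps E A - {S1}"
      using compsA inj t1(1) S1_def by (auto simp: inj_on_def)
    then show ?thesis using sum.reindex[OF inj', of "\<lambda>H. cent E H w"] by simp
  qed
  finally have c1: "cst w t \<le> sum w S + cst w t1 + (\<Sum>H\<in>comps E A - {S1}. cent E H w)" by simp
  have "is_centroid E (verts t) w (root t)"
    using Suc.prems(1) subtrees_self[of t] unfolding centroid_tree_def by blast
  then have "is_centroid E S w r" using vS t(1) by simp
  then have W1: "sum w S1 \<le> sum w S / 2"
    unfolding is_centroid_def using t(4) t1(1) S1_def by auto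
  have W1p: "0 \<le> sum w S1" using wpos S1A A_def Suc.prems(2) by (intro sum_nonneg) blast
  have coef: "0 \<le> (2 - 1 / 2 ^ p :: real)"
  proof -
    have "(1::real) / 2 ^ p \<le> 1" by simp
    then show ?thesis by linarith
  qed
  have M1: "(2 - 1 / 2 ^ p) * sum w S1 \<le> (2 - 1 / 2 ^ p) * (sum w S / 2)"
    using mult_left_mono[OF W1 coef] .
  have M2: "sum w S + (2 - 1 / 2 ^ p) * (sum w S / 2) = (2 - 1 / 2 ^ Suc p) * sum w S"
    by (simp add: field_simps)
  have IH': "cst w t1 \<le> (2 - 1 / 2 ^ p) * sum w S1 + (\<Sum>H\<in>comps E (S1 - P1). cent E H w)"
    using IH img by simp
  have "cst w t \<le> (2 - 1 / 2 ^ Suc p) * sum w S + (\<Sum>H\<in>comps E (A - P1). cent E H w)"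
    using c1 IH' M1 M2 sumeq by linarith
  then show ?case using SP by simp
qed


theorem lemma5:
  fixes E :: "'a \<Rightarrow> 'a \<Rightarrow> bool" and V :: "'a set" and w :: "'a \<Rightarrow> real"
    and C :: "'a rtree" and p :: nat and v :: "nat \<Rightarrow> 'a"
  assumes "is_tree E V"
    and "\<forall>x\<in>V. w x \<ge> 0"
    and "centroid_tree E V w C"
    and "cost w C = cent E V w"
    and "v 0 = root C"
    and "\<forall>i\<in>{1..p}. child_of C (v (i - 1)) (v i)"
  shows "cent E V w \<le> (2 - 1 / 2 ^ p) * sum w V
           + (\<Sum>H\<in>comps E (V - v ` {0..p}). cent E H w)"
proof -
  have symV: "\<forall>x\<in>V. \<forall>y\<in>V. E x y \<longleftrightarrow> E y x" using assms(1) unfolding is_tree_def by blast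
  have "cst w C \<le> (2 - 1 / 2 ^ p) * sum w V + (\<Sum>H\<in>comps E (V - v ` {0..p}). cent E H w)"
    by (rule main[OF symV assms(2) assms(3) _ assms(5) assms(6)]) simp
  then show ?thesis using assms(4) cost_cst[of w C] by simp
qed

end
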